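(* Let $f\in C([0,1])$ and $\varepsilon>0$. If $K\in\mathbb{N}^+$ satisfies $|f(x_1)-f(x_2)|<\varepsilon/2$ for all $x_1,x_2\in[0,1]$ with $|x_1-x_2|<1/K$, then there exists a function $\phi$ generated by a $\sigma$-activated network with width $2$ and depth $3$ such that $\|\phi\|_{L^\infty([0,1])}\le\|f\|_{L^\infty([0,1])}+1$ and $|\phi(x)-f(x)|<\varepsilon$ for all $x\in\bigcup_{k=0}^{K-1}\big[\tfrac{2k}{2K},\tfrac{2k+1}{2K}\big]$.
   Context: Let $\sigma_1:\mathbb{R}\to\mathbb{R}$ be the continuous triangular-wave function of period $2$: $\sigma_1(x)=|x|$ for $x\in[-1,1]$, $\sigma_1(x+2)=\sigma_1(x)$. The activation is $\sigma(x)=\sigma_1(x)$ for $x\ge0$ and $\sigma(x)=x/(|x|+1)$ for $x<0$, applied entrywise. A function generated by a $\sigma$-activated network with one input, width $N$ and depth $L$ is a function of the form $\mathcal{L}_{\ell}\circ\sigma\circ\mathcal{L}_{\ell-1}\circ\cdots\circ\sigma\circ\mathcal{L}_0$ with $\ell\le L$ hidden layers, affine maps $\mathcal{L}_i$, $\mathcal{L}_0$ with domain $\mathbb{R}$, $\mathcal{L}_\ell$ with codomain $\mathbb{R}$, and at most $N$ neurons in each hidden layer. *)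

theory Defs
  imports "HOL-Analysis.Analysis"
begin

text \<open>Triangular wave of period 2: equals |x| on [-1,1].\<close>
definition sigma1 :: "real \<Rightarrow> real" where
  "sigma1 x = \<bar>x - 2 * of_int \<lfloor>(x + 1) / 2\<rfloor>\<bar>"

definition sigma :: "real \<Rightarrow> real" where
  "sigma x = (if x \<ge> 0 then sigma1 x else x / (\<bar>x\<bar> + 1))"

text \<open>hidden_feats N k h n: h x is the output vector (entries h x j, j < n) of the
  k-th hidden layer (after activation) of a sigma-network with one input and
  at most N neurons per hidden layer.\<close>
inductive hidden_feats :: "nat \<Rightarrow> nat \<Rightarrow> (real \<Rightarrow> nat \<Rightarrow> real) \<Rightarrow> nat \<Rightarrow> bool" where
  base: "\<lbrakk>1 \<le> n; n \<le> N; \<And>x j. h x j = sigma (a j * x + b j)\<rbrakk>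
          \<Longrightarrow> hidden_feats N 1 h n"
| step: "\<lbrakk>hidden_feats N k g m; 1 \<le> n; n \<le> N;
          \<And>x j. h x j = sigma ((\<Sum>i<m. W j i * g x i) + c j)\<rbrakk>
          \<Longrightarrow> hidden_feats N (Suc k) h n"

text \<open>Functions generated by a sigma-activated network with one input, width N, depth L
  (at most L hidden layers; l = 0 gives an affine map).\<close>
definition sigma_net :: "nat \<Rightarrow> nat \<Rightarrow> (real \<Rightarrow> real) \<Rightarrow> bool" where
  "sigma_net N L \<phi> \<longleftrightarrow>
     (\<exists>a b. \<forall>x. \<phi> x = a * x + b) \<or>
     (\<exists>l g m w c. 1 \<le> l \<and> l \<le> L \<and> hidden_feats N l g m \<and>
        (\<forall>x. \<phi> x = (\<Sum>i<m. w i * g x i) + c))"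

end

theory Submission
  imports Defs "HOL-Number_Theory.Cong"
begin

lemma sigma1_per: "sigma1 (x + 2 * of_int q) = sigma1 x"
proof -
  have "\<lfloor>(x + 2 * of_int q + 1) / 2\<rfloor> = \<lfloor>(x + 1) / 2\<rfloor> + q"
  proof -
    have "(x + 2 * of_int q + 1) / 2 = (x + 1) / 2 + of_int q" by (simp add: field_simps)
    moreover have "\<lfloor>(x + 1) / 2 + of_int q\<rfloor> = \<lfloor>(x + 1) / 2\<rfloor> + q" by (rule floor_add_int[symmetric])
    ultimately show ?thesis by (simp only:)
  qed
  then show ?thesis unfolding sigma1_def by simp
qed

lemma sigma1_id: assumes "0 \<le> x" "x \<le> 1" shows "sigma1 x = x"
proof (cases "x = 1")
  case True then show ?thesis by (simp add: sigma1_def)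
next
  case False
  then have "\<lfloor>(x + 1) / 2\<rfloor> = 0" using assms by (simp add: floor_eq_iff)
  then show ?thesis using assms by (simp add: sigma1_def)
qed

lemma sigma1_bounds: "0 \<le> sigma1 x \<and> sigma1 x \<le> 1"
proof -
  have "of_int \<lfloor>(x + 1) / 2\<rfloor> \<le> (x + 1) / 2" "(x + 1) / 2 < of_int \<lfloor>(x + 1) / 2\<rfloor> + 1"
    by linarith+
  then show ?thesis unfolding sigma1_def by (auto simp: field_simps)
qed

lemma sigma_gt: "sigma y > -1"
proof (cases "y \<ge> 0")
  case True then show ?thesis using sigma1_bounds[of y] by (simp add: sigma_def)
next
  case False
  then have "y / (\<bar>y\<bar> + 1) > -1" by (simp add: field_simps)
  then show ?thesis using False by (simp add: sigma_def)
qed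

lemma godel_coprime:
  fixes M i j :: nat
  assumes "i < j" "j < K" "fact K dvd M"
  shows "coprime (1 + (i+1)*M) (1 + (j+1)*M)"
proof (rule coprimeI)
  fix d assume da: "d dvd 1 + (i+1)*M" and db: "d dvd 1 + (j+1)*M"
  have eq: "(j+1)*(1 + (i+1)*M) = (i+1)*(1 + (j+1)*M) + (j - i)"
    using assms(1) by (simp add: algebra_simps)
  have "d dvd (j+1)*(1 + (i+1)*M)" using da by (rule dvd_mult)
  moreover have "d dvd (i+1)*(1 + (j+1)*M)" using db by (rule dvd_mult)
  ultimately have "d dvd (j - i)" using eq by (metis dvd_add_right_iff)
  moreover have "(j - i) dvd fact K" using assms by (intro dvd_fact) auto
  ultimately have "d dvd M" using assms(3) dvd_trans by blast
  then have "d dvd (i+1)*M" by simp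
  then have "d dvd (i+1)*M + 1 \<longleftrightarrow> d dvd 1" by (rule dvd_add_right_iff)
  with da show "is_unit d" by (metis add.commute)
qed


theorem theorem14:
  fixes f :: "real \<Rightarrow> real" and \<epsilon> :: real and K :: nat
  assumes "continuous_on {0..1} f"
    and "\<epsilon> > 0"
    and "K \<ge> 1"
    and "\<forall>x1\<in>{0..1}. \<forall>x2\<in>{0..1}. \<bar>x1 - x2\<bar> < 1 / real K \<longrightarrow> \<bar>f x1 - f x2\<bar> < \<epsilon> / 2"
  shows "\<exists>\<phi>. sigma_net 2 3 \<phi> \<and>
           (\<forall>x\<in>{0..1}. \<bar>\<phi> x\<bar> \<le> (SUP y\<in>{0..1}. \<bar>f y\<bar>) + 1) \<and>
           (\<forall>x\<in>(\<Union>k<K. {real (2*k) / real (2*K) .. real (2*k+1) / real (2*K)}).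
              \<bar>\<phi> x - f x\<bar> < \<epsilon>)"
proof -
  have "compact ((\<lambda>y. \<bar>f y\<bar>) ` {0..1})"
    by (intro compact_continuous_image continuous_intros assms(1)) simp
  then have bdd: "bdd_above ((\<lambda>y. \<bar>f y\<bar>) ` {0..1})"
    by (intro bounded_imp_bdd_above compact_imp_bounded)
  define S where "S = (SUP y\<in>{0..1}. \<bar>f y\<bar>)"
  define A where "A = S + 1"
  have fS: "\<bar>f y\<bar> \<le> S" if "y \<in> {0..1}" for y
    unfolding S_def using bdd that by (rule cSUP_upper2) simp
  have S0: "S \<ge> 0" using fS[of 0] by simp
  have A0: "A > 0" unfolding A_def using S0 by simp
  define t where "t = (\<lambda>k::nat. (f (real k / real K) + A) / (2 * A))"
  have Kpos: "real K > 0" using assms(3) by simp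
  have t01: "0 \<le> t k \<and> t k \<le> 1" if "k < K" for k
  proof -
    have "real k / real K \<in> {0..1}" using that Kpos by (simp add: field_simps)
    then have "\<bar>f (real k / real K)\<bar> \<le> S" by (rule fS)
    then show ?thesis unfolding t_def A_def using S0 by (auto simp: field_simps abs_le_iff)
  qed
  obtain L :: nat where L: "real L > 8 * A / \<epsilon>" using reals_Archimedean2 by blast
  define M where "M = fact K * L"
  have LM: "real L \<le> real M" unfolding M_def
    by (metis fact_ge_1 le_refl mult.commute mult_le_mono of_nat_le_iff order.trans mult_1_right)
  have Mbig: "real M > 8 * A / \<epsilon>" using L LM by linarith
  have Mpos: "real M > 0" using Mbig A0 assms(2) by (smt (verit) divide_pos_pos)
  define m where "m = (\<lambda>k::nat. 1 + (k+1)*M)"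
  define r where "r = (\<lambda>k. nat \<lfloor>t k * real (m k) / 2\<rfloor>)"
  have cop: "\<forall>i\<in>{..<K}. \<forall>j\<in>{..<K}. i \<noteq> j \<longrightarrow> coprime (m i) (m j)"
  proof (intro ballI impI)
    fix i j assume ij: "i \<in> {..<K}" "j \<in> {..<K}" "i \<noteq> j"
    have fd: "fact K dvd M" unfolding M_def by simp
    show "coprime (m i) (m j)"
    proof (cases "i < j")
      case True then show ?thesis unfolding m_def using godel_coprime[OF True _ fd] ij by simp
    next
      case False then have "j < i" using ij by simp
      then show ?thesis unfolding m_def using godel_coprime[OF _ _ fd, of j i] ij
        by (simp add: coprime_commute)
    qed
  qed
  obtain \<gamma> :: nat where g: "\<forall>k\<in>{..<K}. [\<gamma> = r k] (mod m k)"
    using chinese_remainder_nat[OF _ cop, of r] by auto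
  have mpos: "real (m k) \<ge> real M + 1" for k unfolding m_def by simp
  have rprop: "real (r k) \<le> t k * real (m k) / 2 \<and> t k * real (m k) / 2 < real (r k) + 1"
    if "k < K" for k
  proof -
    have "t k * real (m k) / 2 \<ge> 0" using t01[OF that] by simp
    then show ?thesis unfolding r_def by linarith
  qed
  have gmod: "\<gamma> mod m k = r k" if "k < K" for k
  proof -
    have "real (r k) \<le> real (m k) / 2" using rprop[OF that] t01[OF that] mpos[of k]
      by (smt (verit) mult_left_le_one_le divide_right_mono of_nat_0_le_iff)
    then have "r k < m k" using mpos[of k] Mpos by linarith
    then show ?thesis using g that by (simp add: cong_def)
  qed
  define \<beta> where "\<beta> = 2 * real \<gamma>"
  define a1 where "a1 = (\<lambda>j::nat. if j = 0 then 1 else 2 * real K)"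
  define b1 where "b1 = (\<lambda>j::nat. 0::real)"
  define h1 where "h1 = (\<lambda>x j. sigma (a1 j * x + b1 j))"
  define W2 where "W2 = (\<lambda>(j::nat) (i::nat). if i = 0 then - real M * real K else real M / 2)"
  define c2 where "c2 = (\<lambda>j::nat. - real M)"
  define h2 where "h2 = (\<lambda>x j. sigma ((\<Sum>i<2. W2 j i * h1 x i) + c2 j))"
  define W3 where "W3 = (\<lambda>(j::nat) (i::nat). \<beta>)"
  define c3 where "c3 = (\<lambda>j::nat. \<beta>)"
  define h3 where "h3 = (\<lambda>x j. sigma ((\<Sum>i<1. W3 j i * h2 x i) + c3 j))"
  define w where "w = (\<lambda>i::nat. 2 * A)"
  define c where "c = - A"
  define \<phi> where "\<phi> = (\<lambda>x. (\<Sum>i<1. w i * h3 x i) + c)"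
  have H1: "hidden_feats 2 1 h1 2"
    by (rule hidden_feats.base[where a = a1 and b = b1]) (auto simp: h1_def)
  have H2: "hidden_feats 2 (Suc 1) h2 1"
    by (rule hidden_feats.step[OF H1, where W = W2 and c = c2]) (auto simp: h2_def)
  have H3: "hidden_feats 2 (Suc (Suc 1)) h3 1"
    by (rule hidden_feats.step[OF H2, where W = W3 and c = c3]) (auto simp: h3_def)
  have net: "sigma_net 2 3 \<phi>"
    unfolding sigma_net_def
    apply (rule disjI2)
    apply (rule exI[of _ 3], rule exI[of _ h3], rule exI[of _ 1], rule exI[of _ w], rule exI[of _ c])
    using H3 by (simp add: \<phi>_def numeral_3_eq_3)
  have h3eq: "h3 x 0 = sigma1 (\<beta> * (h2 x 0 + 1))" for x
  proof -
    have "\<beta> * (h2 x 0 + 1) \<ge> 0" using sigma_gt[of "(\<Sum>i<2. W2 0 i * h1 x i) + c2 0"]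
      unfolding \<beta>_def h2_def by simp
    then show ?thesis unfolding h3_def W3_def c3_def sigma_def by (simp add: algebra_simps)
  qed
  have phieq: "\<phi> x = 2 * A * h3 x 0 - A" for x unfolding \<phi>_def w_def c_def by simp
  have bound: "\<bar>\<phi> x\<bar> \<le> A" for x
  proof -
    have s01: "0 \<le> h3 x 0" "h3 x 0 \<le> 1"
      using sigma1_bounds[of "\<beta> * (h2 x 0 + 1)"] h3eq[of x] by auto
    have "A * h3 x 0 \<le> A" using s01 A0 by (simp add: mult_left_le)
    moreover have "A * h3 x 0 \<ge> 0" using s01 A0 by simp
    ultimately show ?thesis using phieq[of x] by (simp add: abs_le_iff)
  qed
  have approx: "\<bar>\<phi> x - f x\<bar> < \<epsilon>" if k: "k < K"
    and x: "real (2*k) / real (2*K) \<le> x" "x \<le> real (2*k+1) / real (2*K)" for k x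
  proof -
    have x1: "2 * real K * x \<ge> 2 * real k" "2 * real K * x \<le> 2 * real k + 1"
      using x Kpos by (auto simp: field_simps)
    have x01: "x \<in> {0..1}"
    proof -
      have "real (2*k+1) / real (2*K) \<le> 1" using k Kpos by (simp add: field_simps)
      moreover have "0 \<le> real (2*k) / real (2*K)" by simp
      ultimately have "0 \<le> x" "x \<le> 1" using x by linarith+
      then show ?thesis by simp
    qed
    have kK: "real k / real K \<in> {0..1}" using k Kpos by (simp add: field_simps)
    have h10: "h1 x 0 = x" using x01 unfolding h1_def a1_def b1_def sigma_def
      by (simp add: sigma1_id)
    have "sigma1 (2 * real K * x) = sigma1 ((2 * real K * x - 2 * real k) + 2 * of_int (int k))"
      by simp
    also have "\<dots> = 2 * real K * x - 2 * real k"
      using x1 by (subst sigma1_per, intro sigma1_id) auto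
    finally have h11: "h1 x 1 = 2 * real K * x - 2 * real k"
      using x01 Kpos unfolding h1_def a1_def b1_def sigma_def by simp
    have h11': "h1 x (Suc 0) = 2 * real K * x - 2 * real k" using h11 by simp
    have arg2: "(\<Sum>i<2. W2 0 i * h1 x i) + c2 0 = - (real M * (real k + 1))"
      unfolding W2_def c2_def by (simp add: numeral_2_eq_2 h10 h11' algebra_simps)
    have "h2 x 0 = - (real M * (real k + 1)) / (real M * (real k + 1) + 1)"
    proof -
      have pos: "real M * (real k + 1) > 0" using Mpos by simp
      then show ?thesis unfolding h2_def arg2 sigma_def by (simp add: abs_of_pos)
    qed
    moreover have "- a / (a + 1) + 1 = 1 / (a + 1)" if "a \<ge> 0" for a :: real
      using that by (simp add: field_simps)
    moreover have "real (m k) = real M * (real k + 1) + 1" unfolding m_def by (simp add: algebra_simps)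
    ultimately have "h2 x 0 + 1 = 1 / real (m k)"
      using Mpos by simp
    then have "h3 x 0 = sigma1 (2 * real \<gamma> / real (m k))"
      using h3eq[of x] unfolding \<beta>_def by simp
    also have "2 * real \<gamma> / real (m k) = 2 * real (r k) / real (m k) + 2 * of_int (int (\<gamma> div m k))"
    proof -
      have "\<gamma> = (\<gamma> div m k) * m k + r k" using gmod[OF k] div_mult_mod_eq[of \<gamma> "m k"] by simp
      then have "real \<gamma> = real (\<gamma> div m k) * real (m k) + real (r k)"
        by (metis of_nat_add of_nat_mult)
      then show ?thesis using mpos[of k] Mpos by (simp add: field_simps)
    qed
    also have "sigma1 \<dots> = 2 * real (r k) / real (m k)"
    proof -
      have "real (r k) \<le> real (m k) / 2" using rprop[OF k] t01[OF k] mpos[of k]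
        by (smt (verit) mult_left_le_one_le divide_right_mono of_nat_0_le_iff)
      then have "2 * real (r k) / real (m k) \<le> 1" using mpos[of k] Mpos by (simp add: field_simps)
      then show ?thesis by (subst sigma1_per, intro sigma1_id) auto
    qed
    finally have h30: "h3 x 0 = 2 * real (r k) / real (m k)" .
    have mp: "real (m k) > 0" using mpos[of k] Mpos by linarith
    have err1: "\<bar>2 * real (r k) / real (m k) - t k\<bar> < 2 / real M"
    proof -
      have "\<bar>2 * real (r k) - t k * real (m k)\<bar> < 2" using rprop[OF k] by linarith
      then have "\<bar>2 * real (r k) / real (m k) - t k\<bar> < 2 / real (m k)"
        using mp by (simp add: field_simps abs_less_iff)
      also have "\<dots> \<le> 2 / real M" using mpos[of k] Mpos by (simp add: frac_le)
      finally show ?thesis .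
    qed
    have "\<phi> x - f (real k / real K) = 2 * A * (2 * real (r k) / real (m k) - t k)"
      unfolding phieq h30 t_def using A0 by (simp add: field_simps)
    then have "\<bar>\<phi> x - f (real k / real K)\<bar> = 2 * A * \<bar>2 * real (r k) / real (m k) - t k\<bar>"
      using A0 by (simp add: abs_mult)
    also have "\<dots> < 2 * A * (2 / real M)"
      using err1 A0 by (intro mult_strict_left_mono) auto
    also have "\<dots> < \<epsilon> / 2"
      using Mbig Mpos assms(2) A0 by (simp add: field_simps)
    finally have e1: "\<bar>\<phi> x - f (real k / real K)\<bar> < \<epsilon> / 2" .
    have "\<bar>x - real k / real K\<bar> < 1 / real K"
    proof -
      have "real k / real K \<le> x" "x \<le> real k / real K + 1 / (2 * real K)"
        using x Kpos by (auto simp: field_simps)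
      moreover have "1 / (2 * real K) < 1 / real K" using Kpos by (simp add: field_simps)
      ultimately show ?thesis by linarith
    qed
    then have e2: "\<bar>f x - f (real k / real K)\<bar> < \<epsilon> / 2"
      using assms(4) x01 kK by blast
    show ?thesis using e1 e2 by linarith
  qed
  show ?thesis
  proof (intro exI conjI ballI)
    show "sigma_net 2 3 \<phi>" by (rule net)
  next
    fix x :: real assume "x \<in> {0..1}"
    show "\<bar>\<phi> x\<bar> \<le> (SUP y\<in>{0..1}. \<bar>f y\<bar>) + 1" using bound[of x] unfolding A_def S_def .
  next
    fix x assume "x \<in> (\<Union>k<K. {real (2*k) / real (2*K) .. real (2*k+1) / real (2*K)})"
    then obtain k where "k < K" "real (2*k) / real (2*K) \<le> x" "x \<le> real (2*k+1) / real (2*K)"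
      by auto
    then show "\<bar>\<phi> x - f x\<bar> < \<epsilon>" by (rule approx)
  qed
qed

end
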